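(* Let $G=(V,E)$ be a finite simple undirected graph and let $W\subseteq V$, $|W|\ge 2$, be a clique of $G$. Then \[ F_W:=\{x\in STAB(G)\mid x_W=1\}\subseteq STAB(G\mid W)\subseteq STAB(G). \]
   Context: For a graph $G=(V,E)$, $\mathcal S(G)\subseteq\{0,1\}^V$ is the set of characteristic vectors of stable sets of $G$, and $STAB(G)=\mathrm{conv}\,\mathcal S(G)$. For $W\subseteq V$ and $x\in\mathbb R^V$, $x_W=\sum_{v\in W}x_v$. $N(v)$ denotes the neighborhood of $v$ in $G$. The clique projection of a clique $W$ ($|W|\ge 2$) is the graph $G\mid W=(V,E\mid W)$ with $E\mid W=E\cup\{uv\notin E \mid u\neq v,\ W\subseteq N(u)\cup N(v)\}$. *)

theory Defs
  imports "HOL-Analysis.Analysis"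
begin

definition simple_graph :: "'a set \<Rightarrow> 'a set set \<Rightarrow> bool" where
  "simple_graph V E \<longleftrightarrow> finite V \<and> (\<forall>e\<in>E. e \<subseteq> V \<and> card e = 2)"

definition neighborhood :: "'a set set \<Rightarrow> 'a \<Rightarrow> 'a set" where
  "neighborhood E v = {u. {u, v} \<in> E}"

definition is_clique :: "'a set \<Rightarrow> 'a set set \<Rightarrow> 'a set \<Rightarrow> bool" where
  "is_clique V E W \<longleftrightarrow> W \<subseteq> V \<and> (\<forall>u\<in>W. \<forall>v\<in>W. u \<noteq> v \<longrightarrow> {u, v} \<in> E)"

definition stable_set :: "'a set \<Rightarrow> 'a set set \<Rightarrow> 'a set \<Rightarrow> bool" where
  "stable_set V E S \<longleftrightarrow> S \<subseteq> V \<and> (\<forall>u\<in>S. \<forall>v\<in>S. {u, v} \<notin> E)"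

text \<open>Vectors in R^V are represented as functions 'a => real vanishing outside V;
  characteristic vectors of stable sets.\<close>
definition stab_vectors :: "'a set \<Rightarrow> 'a set set \<Rightarrow> ('a \<Rightarrow> real) set" where
  "stab_vectors V E = {indicator S | S. stable_set V E S}"

text \<open>Convex hull of a set of functions 'a => real (the function space is not a
  real_vector instance in the library), written out as the set of finite convex combinations.\<close>
definition conv_fun :: "('a \<Rightarrow> real) set \<Rightarrow> ('a \<Rightarrow> real) set" where
  "conv_fun P = {x. \<exists>F c. finite F \<and> F \<subseteq> P \<and> (\<forall>p\<in>F. c p \<ge> 0) \<and> (\<Sum>p\<in>F. c p) = 1
      \<and> x = (\<lambda>v. \<Sum>p\<in>F. c p * p v)}"

definition STAB :: "'a set \<Rightarrow> 'a set set \<Rightarrow> ('a \<Rightarrow> real) set" where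
  "STAB V E = conv_fun (stab_vectors V E)"

definition xsum :: "('a \<Rightarrow> real) \<Rightarrow> 'a set \<Rightarrow> real" where
  "xsum x W = (\<Sum>v\<in>W. x v)"

definition clique_proj :: "'a set \<Rightarrow> 'a set set \<Rightarrow> 'a set \<Rightarrow> 'a set set" where
  "clique_proj V E W = E \<union> {{u, v} | u v. u \<in> V \<and> v \<in> V \<and> u \<noteq> v \<and> {u, v} \<notin> E \<and>
      W \<subseteq> neighborhood E u \<union> neighborhood E v}"

end

theory Submission
  imports Defs
begin

lemma stab_mono:
  assumes "E \<subseteq> E'"
  shows "STAB V E' \<subseteq> STAB V E"
proof -
  have "stab_vectors V E' \<subseteq> stab_vectors V E"
    using assms unfolding stab_vectors_def stable_set_def by blast
  then show ?thesis unfolding STAB_def conv_fun_def by blast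
qed

lemma stableD: "stable_set V E S \<Longrightarrow> a \<in> S \<Longrightarrow> b \<in> S \<Longrightarrow> {a,b} \<notin> E"
  unfolding stable_set_def by blast

lemma sum_ind_W:
  assumes "finite W" "is_clique V E W" "stable_set V E S"
  shows "(\<Sum>v\<in>W. (indicator S v::real)) = real (card (W \<inter> S))"
    and "card (W \<inter> S) \<le> 1"
proof -
  show "(\<Sum>v\<in>W. (indicator S v::real)) = real (card (W \<inter> S))"
    using assms(1) by (simp add: indicator_def sum.If_cases Int_def)
  have "\<forall>a1\<in>W \<inter> S. \<forall>a2\<in>W \<inter> S. a1 = a2"
    using assms(2,3) unfolding is_clique_def stable_set_def by blast
  then show "card (W \<inter> S) \<le> 1"
    using card_le_Suc0_iff_eq[of "W \<inter> S"] assms(1) by simp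
qed

theorem lemma1:
  fixes V :: "'a set" and E :: "'a set set" and W :: "'a set"
  assumes "simple_graph V E"
    and "is_clique V E W"
    and "card W \<ge> 2"
  shows "{x \<in> STAB V E. xsum x W = 1} \<subseteq> STAB V (clique_proj V E W)
     \<and> STAB V (clique_proj V E W) \<subseteq> STAB V E"
proof
  have WV: "W \<subseteq> V" "finite V" using assms(1,2) unfolding simple_graph_def is_clique_def by auto
  have finW: "finite W" using WV by (rule finite_subset)
  show "STAB V (clique_proj V E W) \<subseteq> STAB V E"
    by (rule stab_mono) (auto simp: clique_proj_def)
  show "{x \<in> STAB V E. xsum x W = 1} \<subseteq> STAB V (clique_proj V E W)"
  proof
    fix x assume "x \<in> {x \<in> STAB V E. xsum x W = 1}"
    then obtain F c where F: "finite F" "F \<subseteq> stab_vectors V E" "\<forall>p\<in>F. c p \<ge> 0"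
      "(\<Sum>p\<in>F. c p) = 1" and xd: "x = (\<lambda>v. \<Sum>p\<in>F. c p * p v)" and xs: "xsum x W = 1"
      unfolding STAB_def conv_fun_def by blast
    define s where "s p = (\<Sum>v\<in>W. p v)" for p :: "'a \<Rightarrow> real"
    have sp: "0 \<le> s p \<and> s p \<le> 1 \<and> (s p = 1 \<longrightarrow> (\<exists>S. p = indicator S \<and> stable_set V E S \<and> W \<inter> S \<noteq> {}))"
      if pF: "p \<in> F" for p
    proof -
      obtain S where S: "p = indicator S" "stable_set V E S"
        using F(2) pF unfolding stab_vectors_def by blast
      have "s p = real (card (W \<inter> S))" "card (W \<inter> S) \<le> 1"
        using sum_ind_W[OF finW assms(2) S(2)] S(1) s_def by auto
      then show ?thesis using S by auto
    qed
    have "xsum x W = (\<Sum>p\<in>F. c p * s p)"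
      unfolding xd xsum_def s_def
      by (simp only: sum_distrib_left) (rule sum.swap)
    then have sz: "(\<Sum>p\<in>F. c p * (1 - s p)) = 0"
      using xs F(4) by (simp add: algebra_simps sum_subtractf)
    have nn: "0 \<le> c p * (1 - s p)" if "p \<in> F" for p
    proof -
      have "s p \<le> 1" "0 \<le> c p" using sp[OF that] F(3) that by simp_all
      then show "0 \<le> c p * (1 - s p)" by simp
    qed
    have z: "\<forall>p\<in>F. c p * (1 - s p) = 0"
      using sum_nonneg_eq_0_iff[OF F(1) nn] sz by simp
    define F' where "F' = {p\<in>F. c p \<noteq> 0}"
    have F'sub: "F' \<subseteq> F" unfolding F'_def by auto
    have s1: "s p = 1" if "p \<in> F'" for p
    proof -
      have "p \<in> F" "c p \<noteq> 0" using that unfolding F'_def by auto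
      then show ?thesis using z by fastforce
    qed
    have "F' \<subseteq> stab_vectors V (clique_proj V E W)"
    proof
      fix p assume pF': "p \<in> F'"
      then obtain S where S: "p = indicator S" "stable_set V E S" "W \<inter> S \<noteq> {}"
        using sp[of p] s1[OF pF'] F'sub pF' by blast
      then obtain w where w: "w \<in> W" "w \<in> S" by blast
      have "stable_set V (clique_proj V E W) S"
        unfolding stable_set_def
      proof (intro conjI ballI)
        show "S \<subseteq> V" using S(2) unfolding stable_set_def by auto
        fix u v assume uv: "u \<in> S" "v \<in> S"
        show "{u, v} \<notin> clique_proj V E W"
        proof
          assume "{u, v} \<in> clique_proj V E W"
          then have "{u,v} \<in> E \<or> (\<exists>u' v'. {u,v} = {u',v'} \<and> W \<subseteq> neighborhood E u' \<union> neighborhood E v')"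
            unfolding clique_proj_def Un_iff mem_Collect_eq by (elim disjE exE conjE) auto
          then show False
          proof (elim disjE exE conjE)
            assume "{u,v} \<in> E" then show ?thesis using stableD[OF S(2) uv] by simp
          next
            fix u' v' assume 2: "{u,v} = {u',v'}" "W \<subseteq> neighborhood E u' \<union> neighborhood E v'"
            have "u' \<in> S \<and> v' \<in> S" using uv 2(1) by (auto simp: doubleton_eq_iff)
            then have "u' \<in> S" "v' \<in> S" by auto
            moreover have "w \<in> neighborhood E u' \<union> neighborhood E v'"
              using 2(2) w(1) by (rule subsetD)
            then have "{w, u'} \<in> E \<or> {w, v'} \<in> E"
              unfolding neighborhood_def by simp
            ultimately show ?thesis using stableD[OF S(2) w(2)] by blast
          qed
        qed
      qed
      then show "p \<in> stab_vectors V (clique_proj V E W)"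
        using S(1) unfolding stab_vectors_def by blast
    qed
    moreover have "(\<Sum>p\<in>F'. c p) = 1"
    proof -
      have "(\<Sum>p\<in>F'. c p) = (\<Sum>p\<in>F. c p)"
        by (rule sum.mono_neutral_left[OF F(1) F'sub]) (auto simp: F'_def)
      then show ?thesis using F(4) by simp
    qed
    moreover have "x = (\<lambda>v. \<Sum>p\<in>F'. c p * p v)"
      unfolding xd
      by (rule ext, rule sum.mono_neutral_right[OF F(1) F'sub]) (auto simp: F'_def)
    ultimately show "x \<in> STAB V (clique_proj V E W)"
      unfolding STAB_def conv_fun_def using F(1) F(3) F'sub finite_subset[OF F'sub F(1)]
      by blast
  qed
qed

end
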